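(* For every base $b\ge 2$ there exist infinitely many $b$-wARH numbers that are not $b$-Niven numbers.
   Context: Fix a base $b\ge 2$. $s_b(N)$ is the sum of the base-$b$ digits of $N$. For a positive integer $X$, its reversal $X^R$ is the integer whose base-$b$ representation is that of $X$ written in reverse order (leading zeros of the result are dropped). A positive integer $N$ is a $b$-wARH number if there exists an integer $A\ge 0$ such that $N=(A+s_b(N))+(A+s_b(N))^R$. A positive integer $N$ is a $b$-Niven number if $s_b(N)$ divides $N$. *)

theory Defs
  imports Main
begin

fun digits :: "nat \<Rightarrow> nat \<Rightarrow> nat list" where
  "digits b n = (if b < 2 \<or> n = 0 then [] else n mod b # digits b (n div b))"

declare digits.simps[simp del]

fun from_digits :: "nat \<Rightarrow> nat list \<Rightarrow> nat" where
  "from_digits b [] = 0"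
| "from_digits b (d # ds) = d + b * from_digits b ds"

definition digit_sum :: "nat \<Rightarrow> nat \<Rightarrow> nat" where
  "digit_sum b n = sum_list (digits b n)"

text \<open>Reversal: write the digits in reverse order; leading zeros of the result
  are dropped automatically when evaluating the value.\<close>
definition reversal :: "nat \<Rightarrow> nat \<Rightarrow> nat" where
  "reversal b x = from_digits b (rev (digits b x))"

definition wARH :: "nat \<Rightarrow> nat \<Rightarrow> bool" where
  "wARH b N \<longleftrightarrow> N > 0 \<and>
     (\<exists>A::nat. N = (A + digit_sum b N) + reversal b (A + digit_sum b N))"

definition Niven :: "nat \<Rightarrow> nat \<Rightarrow> bool" where
  "Niven b N \<longleftrightarrow> N > 0 \<and> digit_sum b N dvd N"

end

theory Submission
  imports Defs
begin

lemma digits_step: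
  assumes "b \<ge> 2" "d < b" "d + b*n > 0"
  shows "digits b (d + b*n) = d # digits b n"
  using assms by (subst digits.simps) simp

lemma ds_step:
  assumes "b \<ge> 2" "d < b"
  shows "digit_sum b (d + b*n) = d + digit_sum b n"
proof (cases "d + b*n = 0")
  case True
  then have "d = 0" "n = 0" using assms by auto
  then show ?thesis by (simp add: digit_sum_def digits.simps)
next
  case False
  then show ?thesis using digits_step[OF assms] by (simp add: digit_sum_def)
qed

lemma ds_split:
  assumes "b \<ge> 2"
  shows "a < b^k \<Longrightarrow> digit_sum b (a + b^k * n) = digit_sum b a + digit_sum b n"
proof (induction k arbitrary: a)
  case 0
  then show ?case by (simp add: digit_sum_def digits.simps)
next
  case (Suc k)
  have a: "a = a mod b + b * (a div b)" by simp
  have lt: "a div b < b^k" using Suc.prems assms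
    by (simp add: less_mult_imp_div_less mult.commute)
  have "a + b^Suc k * n = a mod b + b * (a div b + b^k * n)"
    by (subst a) (simp add: algebra_simps)
  then have "digit_sum b (a + b^Suc k * n) = a mod b + digit_sum b (a div b + b^k * n)"
    using ds_step assms by simp
  also have "\<dots> = a mod b + digit_sum b (a div b) + digit_sum b n"
    using Suc.IH[OF lt] by simp
  also have "a mod b + digit_sum b (a div b) = digit_sum b a"
    using ds_step[OF assms, of "a mod b" "a div b"] assms by simp
  finally show ?case .
qed

lemma digits_pow:
  assumes "b \<ge> 2" "P > 0"
  shows "digits b (b^k * P) = replicate k 0 @ digits b P"
proof (induction k)
  case 0
  then show ?case by simp
next
  case (Suc k)
  have "b^Suc k * P = 0 + b * (b^k * P)" by simp
  also have "digits b \<dots> = 0 # digits b (b^k*P)"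
    using assms by (intro digits_step) auto
  finally show ?case using Suc by simp
qed

lemma from_digits_app:
  "from_digits b (xs @ ys) = from_digits b xs + b^length xs * from_digits b ys"
  by (induction xs) (auto simp: algebra_simps)

lemma from_digits_rep0: "from_digits b (replicate k 0) = 0"
  by (induction k) auto

theorem corollary8:
  fixes b :: nat
  assumes "b \<ge> 2"
  shows "infinite {N. wARH b N \<and> \<not> Niven b N}"
proof -
  define P where "P = 1 + b * ((b - 2) + b * 1)"
  have Pg: "P \<ge> 2*b"
  proof -
    have "b * 2 \<le> b * ((b - 2) + b * 1)" using assms by (intro mult_le_mono2) simp
    then show ?thesis unfolding P_def by (simp only: mult.commute[of b 2])
  qed
  have dP: "digits b P = [1, b-2, 1]"
  proof -
    have "digits b 1 = [1]" using digits_step[OF assms, of 1 0] assms by (simp add: digits.simps)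
    moreover have "digits b ((b-2) + b*1) = (b-2) # digits b 1"
      using assms by (intro digits_step) auto
    moreover have "digits b P = 1 # digits b ((b-2) + b*1)"
      unfolding P_def using assms by (intro digits_step) auto
    ultimately show ?thesis by simp
  qed
  have sP: "digit_sum b P = b" using dP assms by (simp add: digit_sum_def)
  have Plt: "P < b^3"
  proof -
    have "b * ((b - 2) + b * 1) + b * 1 \<le> b * (2*b)"
      unfolding add_mult_distrib2[symmetric] using assms by (intro mult_le_mono2) simp
    then have "P < 2*b*b" unfolding P_def using assms by (simp add: mult.commute)
    also have "\<dots> \<le> b*b*b" using assms by (intro mult_le_mono1) auto
    finally show ?thesis by (simp add: power3_eq_cube)
  qed
  have Pmod: "P mod b = 1" unfolding P_def using assms by (simp only: mod_mult_self2) simp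
  define f where "f k = P + b^(k+3) * P" for k
  have good: "wARH b (f k) \<and> \<not> Niven b (f k)" for k
  proof -
    have lt: "P < b^(k+3)"
    proof -
      have "b^3 \<le> b^(k+3)" using assms by (intro power_increasing) auto
      then show ?thesis using Plt by simp
    qed
    have s: "digit_sum b (f k) = 2*b" unfolding f_def
      using ds_split[OF assms lt] sP by simp
    have rev: "reversal b (b^(k+3) * P) = P"
      unfolding reversal_def using digits_pow[OF assms, of P "k+3"] dP Pg assms
      by (simp add: from_digits_app from_digits_rep0 P_def algebra_simps)
    have X: "b^(k+3) * P \<ge> 2*b"
      using Pg by (metis le_trans mult_le_mono1 nat_mult_1 one_le_power assms
          le_trans[OF _ assms] one_le_numeral mult.commute)
    have w: "wARH b (f k)"
      unfolding wARH_def
    proof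
      show "f k > 0" unfolding f_def using Pg assms by simp
      show "\<exists>A. f k = A + digit_sum b (f k) + reversal b (A + digit_sum b (f k))"
        by (rule exI[of _ "b^(k+3)*P - 2*b"]) (simp add: s X rev, simp add: f_def)
    qed
    have fm: "f k mod b = 1"
    proof -
      have e: "b^(k+3) = b * b^(k+2)"
        by (metis add_Suc_right numeral_2_eq_2 numeral_3_eq_3 power_Suc)
      have "f k = P + b^(k+2) * P * b" unfolding f_def e by (simp only: mult.commute mult.left_commute)
      then show ?thesis using Pmod by (simp only: mod_mult_self1)
    qed
    have "\<not> (2*b) dvd f k"
    proof
      assume "(2*b) dvd f k"
      then have "b dvd f k" by (rule dvd_mult_right)
      then have "f k mod b = 0" by (simp only: dvd_eq_mod_eq_0)
      then show False using fm by simp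
    qed
    then show ?thesis using w s unfolding Niven_def by simp
  qed
  have inj: "inj f"
  proof (rule injI)
    fix x y assume "f x = f y"
    then have "b^(x+3) * P = b^(y+3) * P" unfolding f_def by (rule add_left_imp_eq)
    moreover have "P \<noteq> 0" using Pg assms by linarith
    ultimately have "b^(x+3) = b^(y+3)" by (rule mult_right_cancel[THEN iffD1, rotated])
    then have "x + 3 = y + 3" using assms power_inject_exp[of b "x+3" "y+3"] by linarith
    then show "x = y" by linarith
  qed
  have "range f \<subseteq> {N. wARH b N \<and> \<not> Niven b N}" using good by auto
  moreover have "infinite (range f)"
  proof
    assume "finite (range f)"
    then have "finite (UNIV :: nat set)" using inj by (rule finite_imageD)
    then show False by (rule infinite_UNIV_nat[THEN notE])
  qed
  ultimately show ?thesis by (rule infinite_super)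
qed

end
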